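(* Consider a single arc with affine delay function $D(x)=\alpha x+\beta$, $\alpha\ge0$, $\beta>0$, which is empty at time $t_0$. Let $u^{(n)},u\in L^2_+([t_0,t_f])$ (extended by zero outside $[t_0,t_f]$) be inflow rates with $\|u^{(n)}-u\|_{L^2([t_0,t_f])}\to 0$, with cumulative inflows $U^{(n)}(t)=\int_{t_0}^t u^{(n)}(s)\,ds$, $U(t)=\int_{t_0}^t u(s)\,ds$. Let $\tau^{(n)},\tau$ be the corresponding exit time functions and $V^{(n)},V$ the corresponding cumulative exit counts, as defined in the context. Then $U^{(n)}\to U$, $\tau^{(n)}\to\tau$ and $V^{(n)}\to V$ uniformly on $[t_0,t_f]$.
   Context: For a cumulative inflow $U$ on a single arc that is empty at $t_0$ (and receives no vehicles before $t_0$), the arc volume is $X(t)=U(t)-V(t)$, where $V(t)$ is the cumulative number of vehicles that have exited by time $t$; the exit time of a vehicle entering at time $t$ is $\tau(t)=t+\alpha X(t)+\beta$ (with $\tau(t)=t+\beta$ for $t<t_0$), and first-in-first-out propagation gives $V(\tau(t))=U(t)$. With affine delay and $\beta>0$, $\tau$ is continuous and strictly increasing, so $V(t)=U(\tau^{-1}(t))$ for $t\ge\tau(t_0)$ and $V(t)=0$ for $t<\tau(t_0)$; in particular $\tau(t)=t+\alpha\big[U(t)-U(\tau^{-1}(t))\big]+\beta$ whenever $t\ge \tau(t_0)$, and $\tau(t)=t+\alpha U(t)+\beta$ for $t_0\le t\le \tau(t_0)$. *)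

theory Defs
  imports "HOL-Analysis.Analysis"
begin

text \<open>Outside [t0,tf] it is regarded as zero
  (this is built into the cumulative inflow below).\<close>
definition L2_plus :: "real \<Rightarrow> real \<Rightarrow> (real \<Rightarrow> real) \<Rightarrow> bool" where
  "L2_plus t0 tf u \<longleftrightarrow>
     set_borel_measurable lborel {t0..tf} u \<and>
     set_integrable lborel {t0..tf} (\<lambda>s. (u s)\<^sup>2) \<and>
     (AE s in lborel. s \<in> {t0..tf} \<longrightarrow> u s \<ge> 0)"

definition L2_dist :: "real \<Rightarrow> real \<Rightarrow> (real \<Rightarrow> real) \<Rightarrow> (real \<Rightarrow> real) \<Rightarrow> real" where
  "L2_dist t0 tf f g = sqrt (LINT s:{t0..tf}|lborel. (f s - g s)\<^sup>2)"

definition cum_inflow :: "real \<Rightarrow> real \<Rightarrow> (real \<Rightarrow> real) \<Rightarrow> real \<Rightarrow> real" where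
  "cum_inflow t0 tf u t = (LINT s:({t0..t} \<inter> {t0..tf})|lborel. u s)"

text \<open>Arc dynamics with affine delay D(x) = alpha x + beta for cumulative inflow U,
  empty at t0: tau is the exit time function, V the cumulative exit count,
  X = U - V the arc volume. tau is continuous and strictly increasing (as stated in the context).\<close>
definition arc_dynamics ::
  "real \<Rightarrow> real \<Rightarrow> real \<Rightarrow> (real \<Rightarrow> real) \<Rightarrow> (real \<Rightarrow> real) \<Rightarrow> (real \<Rightarrow> real) \<Rightarrow> bool" where
  "arc_dynamics \<alpha> \<beta> t0 U \<tau> V \<longleftrightarrow>
     (\<forall>t. t < t0 \<longrightarrow> \<tau> t = t + \<beta>) \<and>
     (\<forall>t. t \<ge> t0 \<longrightarrow> \<tau> t = t + \<alpha> * (U t - V t) + \<beta>) \<and>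
     (\<forall>t. V (\<tau> t) = U t) \<and>
     (\<forall>t. t < \<tau> t0 \<longrightarrow> V t = 0) \<and>
     continuous_on UNIV \<tau> \<and> strict_mono \<tau>"

end

theory Submission
  imports Defs
begin

lemma fin_meas: "S \<subseteq> {a..b::real} \<Longrightarrow> emeasure lborel S < \<infinity>"
  by (metis emeasure_lborel_Icc_eq emeasure_mono ennreal_less_top infinity_ennreal_def
      order_le_less_trans sets_lborel atLeastAtMost_borel)

lemma sint_const: "S \<in> sets lborel \<Longrightarrow> S \<subseteq> {a..b::real} \<Longrightarrow> set_integrable lborel S (\<lambda>_. c::real)"
  unfolding set_integrable_def using fin_meas by (simp add: integrable_real_mult_indicator)

lemma L2_int:
  fixes f :: "real \<Rightarrow> real"
  assumes m: "set_borel_measurable lborel {a..b} f"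
    and sq: "set_integrable lborel {a..b} (\<lambda>s. (f s)^2)"
  shows "set_integrable lborel {a..b} f"
proof -
  have c: "set_integrable lborel {a..b} (\<lambda>s. 1::real)" by (rule sint_const) auto
  have "set_integrable lborel {a..b} (\<lambda>s. ((f s)^2 + 1))"
    using set_integral_add(1)[OF sq c] .
  then have i: "set_integrable lborel {a..b} (\<lambda>s. ((f s)^2 + 1)/2)" by simp
  have pt: "\<bar>f x\<bar> * 2 \<le> (f x)^2 + 1" for x
  proof -
    have "0 \<le> (\<bar>f x\<bar> - 1)^2" by simp
    then show ?thesis by (simp add: power2_eq_square algebra_simps)
  qed
  show ?thesis
    by (rule set_integrable_bound[OF i m]) (intro AE_I2, simp add: pt)
qed

lemma L2_bound:
  fixes f :: "real \<Rightarrow> real"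
  assumes m: "set_borel_measurable lborel {a..b} f"
    and sq: "set_integrable lborel {a..b} (\<lambda>s. (f s)^2)"
    and S: "S \<in> sets lborel" "S \<subseteq> {a..b}" and l: "l > 0"
  shows "\<bar>LINT s:S|lborel. f s\<bar> \<le> (LINT s:{a..b}|lborel. (f s)^2)/(2*l) + l/2 * measure lborel S"
proof -
  have fS: "set_integrable lborel S f"
    using set_integrable_subset[OF L2_int[OF m sq] S] .
  have sqS: "set_integrable lborel S (\<lambda>s. (f s)^2)"
    using set_integrable_subset[OF sq S] .
  have cS: "set_integrable lborel S (\<lambda>_. l/2)" using sint_const S by blast
  have sqS': "set_integrable lborel S (\<lambda>s. (f s)^2/(2*l))" using sqS l by simp
  have gS: "set_integrable lborel S (\<lambda>s. (f s)^2/(2*l) + l/2)"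
    using set_integral_add(1)[OF sqS' cS] .
  have pt: "\<bar>f x\<bar> \<le> (f x)^2/(2*l) + l/2" for x
  proof -
    have "0 \<le> (\<bar>f x\<bar> - l)^2" by simp
    then have "2 * l * \<bar>f x\<bar> \<le> (f x)^2 + l^2" by (simp add: power2_eq_square algebra_simps)
    then show ?thesis using l by (simp add: field_simps power2_eq_square)
  qed
  have e1: "(LINT s:S|lborel. f s) \<le> (LINT s:S|lborel. (f s)^2/(2*l) + l/2)"
    by (rule set_integral_mono[OF fS gS]) (use pt in \<open>auto simp: abs_le_iff\<close>)
  have e2: "(LINT s:S|lborel. - f s) \<le> (LINT s:S|lborel. (f s)^2/(2*l) + l/2)"
    by (rule set_integral_mono) (use fS gS pt in \<open>auto simp: abs_le_iff set_integrable_def\<close>)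
  have e2': "(LINT s:S|lborel. - f s) = - (LINT s:S|lborel. f s)"
    using set_integral_uminus[OF fS] .
  have eg: "(LINT s:S|lborel. (f s)^2/(2*l) + l/2) = (LINT s:S|lborel. (f s)^2)/(2*l) + l/2 * measure lborel S"
    using set_integral_add(2)[OF sqS' cS] set_integral_const[of S lborel "l/2"] S fin_meas[OF S(2)]
    by (simp add: less_top)
  have un: "{a..b} = S \<union> ({a..b} - S)" using S by auto
  have i2: "set_integrable lborel ({a..b} - S) (\<lambda>s. (f s)^2)"
    by (rule set_integrable_subset[OF sq]) (use S in auto)
  have nn: "0 \<le> (LINT s:({a..b} - S)|lborel. (f s)^2)"
    unfolding set_lebesgue_integral_def by (rule integral_nonneg_AE) (intro AE_I2, simp)
  have "(LINT s:{a..b}|lborel. (f s)^2) = (LINT s:S|lborel. (f s)^2) + (LINT s:({a..b} - S)|lborel. (f s)^2)"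
    by (subst un, rule set_integral_Un[OF _ sqS i2]) auto
  then have "(LINT s:S|lborel. (f s)^2) \<le> (LINT s:{a..b}|lborel. (f s)^2)" using nn by linarith
  then have "(LINT s:S|lborel. (f s)^2)/(2*l) \<le> (LINT s:{a..b}|lborel. (f s)^2)/(2*l)"
    using l by (simp add: divide_right_mono)
  then show ?thesis using e1 e2 e2' eg by (simp add: abs_le_iff)
qed

lemma cum_diff:
  assumes u: "L2_plus t0 tf u" and xy: "x \<le> y"
  shows "cum_inflow t0 tf u y - cum_inflow t0 tf u x = (LINT s:({x<..y} \<inter> {t0..tf})|lborel. u s)"
proof -
  have m: "set_borel_measurable lborel {t0..tf} u" and sq: "set_integrable lborel {t0..tf} (\<lambda>s. (u s)^2)"
    using u unfolding L2_plus_def by auto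
  have I: "set_integrable lborel {t0..tf} u" using L2_int[OF m sq] .
  have e: "{t0..y} \<inter> {t0..tf} = ({t0..x} \<inter> {t0..tf}) \<union> ({x<..y} \<inter> {t0..tf})"
    using xy by auto
  have i1: "set_integrable lborel ({t0..x} \<inter> {t0..tf}) u" by (rule set_integrable_subset[OF I]) auto
  have i2: "set_integrable lborel ({x<..y} \<inter> {t0..tf}) u" by (rule set_integrable_subset[OF I]) auto
  have "cum_inflow t0 tf u y = cum_inflow t0 tf u x + (LINT s:({x<..y} \<inter> {t0..tf})|lborel. u s)"
    unfolding cum_inflow_def by (subst e, rule set_integral_Un[OF _ i1 i2]) auto
  then show ?thesis by simp
qed

lemma cum_mono:
  assumes u: "L2_plus t0 tf u" and xy: "x \<le> y"
  shows "cum_inflow t0 tf u x \<le> cum_inflow t0 tf u y"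
proof -
  have m: "set_borel_measurable lborel {t0..tf} u" and sq: "set_integrable lborel {t0..tf} (\<lambda>s. (u s)^2)"
    and ae: "AE s in lborel. s \<in> {t0..tf} \<longrightarrow> u s \<ge> 0"
    using u unfolding L2_plus_def by auto
  have I: "set_integrable lborel {t0..tf} u" using L2_int[OF m sq] .
  have i2: "set_integrable lborel ({x<..y} \<inter> {t0..tf}) u" by (rule set_integrable_subset[OF I]) auto
  have "(LINT s:({x<..y} \<inter> {t0..tf})|lborel. (0::real)) \<le> (LINT s:({x<..y} \<inter> {t0..tf})|lborel. u s)"
    by (rule set_integral_mono_AE[OF _ i2]) (use ae in \<open>auto simp: set_integrable_def elim!: AE_mp\<close>)
  then show ?thesis using cum_diff[OF u xy] by simp
qed

lemma cum_cont:
  assumes u: "L2_plus t0 tf u" and l: "l > 0"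
  shows "\<bar>cum_inflow t0 tf u y - cum_inflow t0 tf u x\<bar>
     \<le> (LINT s:{t0..tf}|lborel. (u s)^2)/(2*l) + l/2 * \<bar>y - x\<bar>"
proof -
  have m: "set_borel_measurable lborel {t0..tf} u" and sq: "set_integrable lborel {t0..tf} (\<lambda>s. (u s)^2)"
    using u unfolding L2_plus_def by auto
  have *: "\<bar>cum_inflow t0 tf u y - cum_inflow t0 tf u x\<bar>
     \<le> (LINT s:{t0..tf}|lborel. (u s)^2)/(2*l) + l/2 * (y - x)" if xy: "x \<le> y" for x y
  proof -
    have "measure lborel ({x<..y} \<inter> {t0..tf}) \<le> measure lborel {x..y}"
      by (rule measure_mono_fmeasurable) (use fin_meas[of "{x..y}" x y] in \<open>auto simp: fmeasurable_def\<close>)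
    then have "measure lborel ({x<..y} \<inter> {t0..tf}) \<le> y - x" using xy by simp
    then have "l/2 * measure lborel ({x<..y} \<inter> {t0..tf}) \<le> l/2 * (y - x)" using l by simp
    moreover have "\<bar>LINT s:({x<..y} \<inter> {t0..tf})|lborel. u s\<bar> \<le> (LINT s:{t0..tf}|lborel. (u s)^2)/(2*l) + l/2 * measure lborel ({x<..y} \<inter> {t0..tf})"
      by (rule L2_bound[OF m sq _ _ l]) auto
    ultimately show ?thesis using cum_diff[OF u xy] by simp
  qed
  show ?thesis
  proof (cases "x \<le> y")
    case True then show ?thesis using *[OF True] by simp
  next
    case False then show ?thesis using *[of y x] by (simp add: abs_minus_commute)
  qed
qed

lemma sbm_diff:
  assumes "set_borel_measurable lborel A f" "set_borel_measurable lborel A (g::real\<Rightarrow>real)"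
  shows "set_borel_measurable lborel A (\<lambda>x. f x - g x)"
proof -
  have "(\<lambda>x. indicator A x *\<^sub>R (f x - g x)) = (\<lambda>x. indicator A x *\<^sub>R f x - indicator A x *\<^sub>R g x)"
    by (simp add: algebra_simps)
  then show ?thesis using assms unfolding set_borel_measurable_def by simp
qed

lemma sbm_sq:
  assumes "set_borel_measurable lborel A (f::real\<Rightarrow>real)"
  shows "set_borel_measurable lborel A (\<lambda>x. (f x)^2)"
proof -
  have "(\<lambda>x. indicator A x *\<^sub>R (f x)^2) = (\<lambda>x. (indicator A x *\<^sub>R f x)^2)"
    by (auto simp: indicator_def fun_eq_iff)
  then show ?thesis using assms unfolding set_borel_measurable_def by simp
qed

lemma cum_unif:
  assumes u: "L2_plus t0 tf u" and v: "L2_plus t0 tf v" and l: "l > 0" and t: "t0 \<le> tf"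
  shows "\<bar>cum_inflow t0 tf v t - cum_inflow t0 tf u t\<bar> \<le> (L2_dist t0 tf v u)^2/(2*l) + l/2 * (tf - t0)"
proof -
  have m: "set_borel_measurable lborel {t0..tf} u" and sq: "set_integrable lborel {t0..tf} (\<lambda>s. (u s)^2)"
    using u unfolding L2_plus_def by auto
  have mv: "set_borel_measurable lborel {t0..tf} v" and sqv: "set_integrable lborel {t0..tf} (\<lambda>s. (v s)^2)"
    using v unfolding L2_plus_def by auto
  have md: "set_borel_measurable lborel {t0..tf} (\<lambda>s. v s - u s)" by (rule sbm_diff[OF mv m])
  have s1: "set_integrable lborel {t0..tf} (\<lambda>s. (v s)^2 + (u s)^2)"
    using set_integral_add(1)[OF sqv sq] by simp
  have ss: "set_integrable lborel {t0..tf} (\<lambda>s. ((v s)^2 + (u s)^2) + ((v s)^2 + (u s)^2))"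
    using set_integral_add(1)[OF s1 s1] by simp
  have sqd: "set_integrable lborel {t0..tf} (\<lambda>s. (v s - u s)^2)"
  proof (rule set_integrable_bound[OF ss sbm_sq[OF md]], intro AE_I2 impI)
    fix x
    have "0 \<le> (v x + u x)^2" by simp
    then have b: "(v x - u x)^2 \<le> ((v x)^2 + (u x)^2) + ((v x)^2 + (u x)^2)"
      by (simp add: power2_eq_square algebra_simps)
    have a: "norm ((v x - u x)^2) = (v x - u x)^2" by simp
    have c: "norm (((v x)^2 + (u x)^2) + ((v x)^2 + (u x)^2)) = ((v x)^2 + (u x)^2) + ((v x)^2 + (u x)^2)"
      by (simp add: abs_of_nonneg)
    show "norm ((v x - u x)^2) \<le> norm (((v x)^2 + (u x)^2) + ((v x)^2 + (u x)^2))"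
      using a b c by linarith
  qed
  define S where "S = {t0..t} \<inter> {t0..tf}"
  have Sm: "S \<in> sets lborel" "S \<subseteq> {t0..tf}" unfolding S_def by auto
  have I: "set_integrable lborel S u" using set_integrable_subset[OF L2_int[OF m sq] Sm] .
  have Iv: "set_integrable lborel S v" using set_integrable_subset[OF L2_int[OF mv sqv] Sm] .
  have "cum_inflow t0 tf v t - cum_inflow t0 tf u t = (LINT s:S|lborel. v s - u s)"
    unfolding cum_inflow_def S_def[symmetric] using set_integral_diff(2)[OF Iv I] by simp
  moreover have "\<bar>LINT s:S|lborel. v s - u s\<bar> \<le> (LINT s:{t0..tf}|lborel. (v s - u s)^2)/(2*l) + l/2 * measure lborel S"
    by (rule L2_bound[OF md sqd Sm l])
  moreover have "measure lborel S \<le> tf - t0"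
    using measure_mono_fmeasurable[of S "{t0..tf}" lborel] Sm t fin_meas[of "{t0..tf}" t0 tf] by (auto simp: fmeasurable_def)
  moreover have "(L2_dist t0 tf v u)^2 = (LINT s:{t0..tf}|lborel. (v s - u s)^2)"
  proof -
    have "0 \<le> (LINT s:{t0..tf}|lborel. (v s - u s)^2)"
      unfolding set_lebesgue_integral_def by (rule integral_nonneg_AE) (intro AE_I2, simp)
    then show ?thesis unfolding L2_dist_def by simp
  qed
  ultimately show ?thesis using l
    by (smt (verit, best) mult_left_mono divide_nonneg_pos)
qed

lemma cum_conv:
  assumes un: "\<And>n. L2_plus t0 tf (us n)" and u: "L2_plus t0 tf u" and t: "t0 < tf"
    and lim: "(\<lambda>n. L2_dist t0 tf (us n) u) \<longlonglongrightarrow> 0" and e: "e > 0"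
  shows "eventually (\<lambda>n. \<forall>t. \<bar>cum_inflow t0 tf (us n) t - cum_inflow t0 tf u t\<bar> < e) sequentially"
proof -
  define L where "L = tf - t0"
  have L: "L > 0" unfolding L_def using t by simp
  define l where "l = e / L"
  have l: "l > 0" unfolding l_def using e L by simp
  have "(\<lambda>n. (L2_dist t0 tf (us n) u)^2) \<longlonglongrightarrow> 0^2" by (rule tendsto_power[OF lim])
  then have "(\<lambda>n. (L2_dist t0 tf (us n) u)^2) \<longlonglongrightarrow> 0" by simp
  moreover have "e * l > 0" using e l by simp
  ultimately have ev: "eventually (\<lambda>n. (L2_dist t0 tf (us n) u)^2 < e * l) sequentially"
    using order_tendstoD(2) by blast
  show ?thesis
  proof (rule eventually_mono[OF ev], intro allI)
    fix n t assume h: "(L2_dist t0 tf (us n) u)^2 < e * l"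
    have b: "\<bar>cum_inflow t0 tf (us n) t - cum_inflow t0 tf u t\<bar> \<le> (L2_dist t0 tf (us n) u)^2/(2*l) + l/2 * (tf - t0)"
      using cum_unif[OF u un l] t by simp
    have "(L2_dist t0 tf (us n) u)^2/(2*l) < (e * l)/(2*l)"
      using h l by (intro divide_strict_right_mono) auto
    also have "(e * l)/(2*l) = e/2" using l by simp
    finally have b1: "(L2_dist t0 tf (us n) u)^2/(2*l) < e/2" .
    have b2: "l/2 * (tf - t0) = e/2" unfolding l_def L_def[symmetric] using L by simp
    show "\<bar>cum_inflow t0 tf (us n) t - cum_inflow t0 tf u t\<bar> < e" using b b1 b2 by linarith
  qed
qed

lemma cum_ucont:
  assumes u: "L2_plus t0 tf u" and e: "e > 0"
  shows "\<exists>d>0. \<forall>x y. \<bar>y - x\<bar> < d \<longrightarrow> \<bar>cum_inflow t0 tf u y - cum_inflow t0 tf u x\<bar> < e"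
proof -
  define A where "A = (LINT s:{t0..tf}|lborel. (u s)^2)"
  have A: "A \<ge> 0" unfolding A_def set_lebesgue_integral_def
    by (rule integral_nonneg_AE) (intro AE_I2, simp)
  define l where "l = (A + 1) / e"
  have l: "l > 0" unfolding l_def using A e by simp
  define d where "d = e / l"
  have d: "d > 0" unfolding d_def using e l by simp
  have b1: "A/(2*l) < e/2"
  proof -
    have "A/(2*l) = A * e / (2 * (A + 1))" unfolding l_def using e A by (simp add: field_simps)
    also have "\<dots> < (A + 1) * e / (2 * (A + 1))"
      using e A by (intro divide_strict_right_mono mult_strict_right_mono) auto
    also have "\<dots> = e/2" using A by (simp add: field_simps)
    finally show ?thesis .
  qed
  have "\<forall>x y. \<bar>y - x\<bar> < d \<longrightarrow> \<bar>cum_inflow t0 tf u y - cum_inflow t0 tf u x\<bar> < e"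
  proof (intro allI impI)
    fix x y assume xy: "\<bar>y - x\<bar> < d"
    have "l/2 * \<bar>y - x\<bar> < l/2 * d" using xy l by simp
    also have "l/2 * d = e/2" unfolding d_def using l by simp
    finally have "l/2 * \<bar>y - x\<bar> < e/2" .
    then show "\<bar>cum_inflow t0 tf u y - cum_inflow t0 tf u x\<bar> < e"
      using cum_cont[OF u l, of y x] b1 unfolding A_def by linarith
  qed
  then show ?thesis using d by blast
qed

lemma dyn_low: "arc_dynamics \<alpha> \<beta> t0 U \<tau> V \<Longrightarrow> t < t0 \<Longrightarrow> \<tau> t = t + \<beta>"
  unfolding arc_dynamics_def by blast
lemma dyn_hi: "arc_dynamics \<alpha> \<beta> t0 U \<tau> V \<Longrightarrow> t \<ge> t0 \<Longrightarrow> \<tau> t = t + \<alpha> * (U t - V t) + \<beta>"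
  unfolding arc_dynamics_def by blast
lemma dyn_VU: "arc_dynamics \<alpha> \<beta> t0 U \<tau> V \<Longrightarrow> V (\<tau> t) = U t"
  unfolding arc_dynamics_def by blast
lemma dyn_cont: "arc_dynamics \<alpha> \<beta> t0 U \<tau> V \<Longrightarrow> continuous_on UNIV \<tau>"
  unfolding arc_dynamics_def by blast
lemma dyn_sm: "arc_dynamics \<alpha> \<beta> t0 U \<tau> V \<Longrightarrow> strict_mono \<tau>"
  unfolding arc_dynamics_def by blast

lemma tau_gt:
  assumes d: "arc_dynamics \<alpha> \<beta> t0 U \<tau> V" and b: "\<beta> > 0"
  shows "\<tau> x > x"
proof (rule ccontr)
  assume "\<not> \<tau> x > x"
  then have tx: "\<tau> x - x \<le> 0" by simp
  have low: "\<And>t. t < t0 \<Longrightarrow> \<tau> t = t + \<beta>" and hi: "\<And>t. t \<ge> t0 \<Longrightarrow> \<tau> t = t + \<alpha> * (U t - V t) + \<beta>"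
    and VU: "\<And>t. V (\<tau> t) = U t" and c: "continuous_on UNIV \<tau>"
    using dyn_low[OF d] dyn_hi[OF d] dyn_VU[OF d] dyn_cont[OF d] by auto
  have xt: "x \<ge> t0"
  proof (rule ccontr)
    assume "\<not> x \<ge> t0"
    then have "\<tau> x = x + \<beta>" using low by simp
    then show False using tx b by simp
  qed
  have cg: "continuous_on {t0-1..x} (\<lambda>y. \<tau> y - y)"
    by (intro continuous_intros continuous_on_subset[OF c]) simp
  have "\<tau> (t0 - 1) - (t0 - 1) = \<beta>" using low by simp
  then have "\<exists>z. t0 - 1 \<le> z \<and> z \<le> x \<and> \<tau> z - z = 0"
    using IVT2'[of "\<lambda>y. \<tau> y - y" x 0 "t0 - 1", OF tx _ _ cg] b xt by simp
  then obtain z where z: "t0 - 1 \<le> z" "z \<le> x" "\<tau> z - z = 0" by blast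
  have zt: "z \<ge> t0"
  proof (rule ccontr)
    assume "\<not> z \<ge> t0"
    then have "\<tau> z = z + \<beta>" using low by simp
    then show False using z(3) b by simp
  qed
  have "V z = U z" using VU[of z] z(3) by simp
  then have "\<tau> z = z + \<beta>" using hi[OF zt] by simp
  then show False using z(3) b by simp
qed

lemma tau_surj:
  assumes d: "arc_dynamics \<alpha> \<beta> t0 U \<tau> V" and b: "\<beta> > 0"
  shows "\<exists>s. \<tau> s = t \<and> s < t"
proof -
  note low = dyn_low[OF d] and c = dyn_cont[OF d]
  define a where "a = min t t0 - \<beta>"
  have al: "a < t0" unfolding a_def using b by simp
  have "\<tau> a = a + \<beta>" using low[OF al] .
  then have h1: "\<tau> a \<le> t" unfolding a_def by simp
  have h2: "t \<le> \<tau> t" using tau_gt[OF d b, of t] by simp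
  have h3: "a \<le> t" unfolding a_def using b by simp
  have cc: "continuous_on {a..t} \<tau>" using continuous_on_subset[OF c] by simp
  obtain s where s: "a \<le> s" "s \<le> t" "\<tau> s = t"
    using IVT'[of \<tau> a t t, OF h1 h2 h3 cc] by blast
  have "s \<noteq> t" using tau_gt[OF d b, of t] s(3) by auto
  then show ?thesis using s by auto
qed

lemma tau_ge:
  assumes d: "arc_dynamics \<alpha> \<beta> t0 U \<tau> V" and b: "\<beta> > 0" and a: "\<alpha> \<ge> 0"
    and m: "\<And>x y. x \<le> y \<Longrightarrow> U x \<le> U y"
  shows "\<tau> x \<ge> x + \<beta>"
proof (cases "x < t0")
  case True then show ?thesis using dyn_low[OF d True] by simp
next
  case False
  then have xt: "x \<ge> t0" by simp
  obtain s where s: "\<tau> s = x" "s < x" using tau_surj[OF d b] by blast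
  have "V x = U s" using dyn_VU[OF d, of s] s by simp
  then have "V x \<le> U x" using m[of s x] s by simp
  then have "0 \<le> \<alpha> * (U x - V x)" using a by simp
  then show ?thesis using dyn_hi[OF d xt] by simp
qed

lemma inv_stab:
  fixes \<tau> :: "real \<Rightarrow> real" and \<tau>s :: "nat \<Rightarrow> real \<Rightarrow> real"
  assumes cont: "continuous_on UNIV \<tau>" and sm: "strict_mono \<tau>" and smn: "\<And>n. strict_mono (\<tau>s n)"
    and unif: "\<And>e. e > 0 \<Longrightarrow> eventually (\<lambda>n. \<forall>x\<le>T. \<bar>\<tau>s n x - \<tau> x\<bar> < e) sequentially"
    and ep: "\<epsilon> > 0"
  shows "eventually (\<lambda>n. \<forall>s s'. a \<le> s \<longrightarrow> s \<le> T \<longrightarrow> s' \<le> T \<longrightarrow> \<tau>s n s' = \<tau> s \<longrightarrow> \<bar>s' - s\<bar> \<le> \<epsilon>) sequentially"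
proof (cases "a \<le> T")
  case False then show ?thesis by (intro always_eventually) simp
next
  case True
  define g where "g x = min (\<tau> (x + \<epsilon>) - \<tau> x) (\<tau> x - \<tau> (x - \<epsilon>))" for x
  have c1: "continuous_on UNIV (\<lambda>x. \<tau> (x + \<epsilon>))"
    by (rule continuous_on_compose2[OF cont]) (intro continuous_intros, simp)
  have c2: "continuous_on UNIV (\<lambda>x. \<tau> (x - \<epsilon>))"
    by (rule continuous_on_compose2[OF cont]) (intro continuous_intros, simp)
  have cg: "continuous_on {a..T} g" unfolding g_def
    using continuous_on_subset[OF c1] continuous_on_subset[OF c2] continuous_on_subset[OF cont]
    by (intro continuous_intros) simp_all
  obtain x0 where x0: "x0 \<in> {a..T}" "\<forall>y\<in>{a..T}. g x0 \<le> g y"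
    using continuous_attains_inf[OF compact_Icc _ cg] True by auto
  define \<delta> where "\<delta> = g x0"
  have "\<tau> (x0 + \<epsilon>) > \<tau> x0" "\<tau> x0 > \<tau> (x0 - \<epsilon>)" using strict_monoD[OF sm] ep by simp_all
  then have dp: "\<delta> > 0" unfolding \<delta>_def g_def by simp
  then have "\<delta>/2 > 0" by simp
  note ev = unif[OF this]
  show ?thesis
    using ev
  proof (elim eventually_mono, intro allI impI)
    fix n s s'
    assume U: "\<forall>x\<le>T. \<bar>\<tau>s n x - \<tau> x\<bar> < \<delta> / 2" and h: "a \<le> s" "s \<le> T" "s' \<le> T" "\<tau>s n s' = \<tau> s"
    have gs: "\<delta> \<le> g s" using x0 h unfolding \<delta>_def by auto
    show "\<bar>s' - s\<bar> \<le> \<epsilon>"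
    proof (rule ccontr)
      assume "\<not> \<bar>s' - s\<bar> \<le> \<epsilon>"
      then consider "s' > s + \<epsilon>" | "s' < s - \<epsilon>" by linarith
      then show False
      proof cases
        case 1
        have "\<tau>s n (s + \<epsilon>) < \<tau>s n s'" using strict_monoD[OF smn[of n] 1] .
        moreover have "s + \<epsilon> \<le> T" using 1 h by simp
        then have "\<bar>\<tau>s n (s + \<epsilon>) - \<tau> (s + \<epsilon>)\<bar> < \<delta>/2" using U by simp
        moreover have "\<tau> (s + \<epsilon>) - \<tau> s \<ge> \<delta>" using gs unfolding g_def by simp
        ultimately show False using h(4) by linarith
      next
        case 2
        have "\<tau>s n s' < \<tau>s n (s - \<epsilon>)" using strict_monoD[OF smn[of n] 2] .
        moreover have "s - \<epsilon> \<le> T" using h ep by simp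
        then have "\<bar>\<tau>s n (s - \<epsilon>) - \<tau> (s - \<epsilon>)\<bar> < \<delta>/2" using U by simp
        moreover have "\<tau> s - \<tau> (s - \<epsilon>) \<ge> \<delta>" using gs unfolding g_def by simp
        ultimately show False using h(4) by linarith
      qed
    qed
  qed
qed

lemma step:
  fixes Us \<tau>s Vs :: "nat \<Rightarrow> real \<Rightarrow> real" and U \<tau> V :: "real \<Rightarrow> real"
  assumes dn: "\<And>n. arc_dynamics \<alpha> \<beta> t0 (Us n) (\<tau>s n) (Vs n)" and d: "arc_dynamics \<alpha> \<beta> t0 U \<tau> V"
    and a: "\<alpha> \<ge> 0" and b: "\<beta> > 0"
    and mn: "\<And>n x y. x \<le> y \<Longrightarrow> Us n x \<le> Us n y" and m: "\<And>x y. x \<le> y \<Longrightarrow> U x \<le> U y"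
    and Uc: "\<And>e. e > 0 \<Longrightarrow> eventually (\<lambda>n. \<forall>t. \<bar>Us n t - U t\<bar> < e) sequentially"
    and Uu: "\<And>e. e > 0 \<Longrightarrow> \<exists>d>0. \<forall>x y. \<bar>y - x\<bar> < d \<longrightarrow> \<bar>U y - U x\<bar> < e"
    and unif: "\<And>e. e > 0 \<Longrightarrow> eventually (\<lambda>n. \<forall>x\<le>T. \<bar>\<tau>s n x - \<tau> x\<bar> < e) sequentially"
    and e: "e > 0"
  shows "eventually (\<lambda>n. \<forall>t\<le>T+\<beta>. \<bar>\<tau>s n t - \<tau> t\<bar> < e \<and> (t0 \<le> t \<longrightarrow> \<bar>Vs n t - V t\<bar> < e)) sequentially"
proof -
  define e' where "e' = e / (2*(\<alpha>+1))"
  have e'p: "e' > 0" unfolding e'_def using e a by simp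
  have e'e: "e' \<le> e" unfolding e'_def using e a by (simp add: field_simps)
  have ae: "\<alpha> * (2*e') < e"
  proof -
    have "\<alpha> * (2*e') = \<alpha> * e / (\<alpha> + 1)" unfolding e'_def using a by (simp add: field_simps)
    also have "\<dots> < e" using a e by (simp add: field_simps)
    finally show ?thesis .
  qed
  have "e'/2 > 0" using e'p by simp
  then obtain dd where dd: "dd > 0" "\<forall>x y. \<bar>y - x\<bar> < dd \<longrightarrow> \<bar>U y - U x\<bar> < e'/2"
    using Uu by blast
  have ev1: "eventually (\<lambda>n. \<forall>t. \<bar>Us n t - U t\<bar> < e'/2) sequentially" using Uc \<open>e'/2 > 0\<close> by blast
  have "dd/2 > 0" using dd by simp
  have ev2: "eventually (\<lambda>n. \<forall>s s'. t0 - \<beta> \<le> s \<longrightarrow> s \<le> T \<longrightarrow> s' \<le> T \<longrightarrow> \<tau>s n s' = \<tau> s \<longrightarrow> \<bar>s' - s\<bar> \<le> dd/2) sequentially"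
    by (rule inv_stab[OF dyn_cont[OF d] dyn_sm[OF d] dyn_sm[OF dn] unif \<open>dd/2 > 0\<close>])
  show ?thesis
    using ev1 ev2
  proof eventually_elim
    case (elim n)
    note H1 = elim(1) and H2 = elim(2)
    show ?case
    proof (intro allI impI)
      fix t assume tT: "t \<le> T + \<beta>"
      show "\<bar>\<tau>s n t - \<tau> t\<bar> < e \<and> (t0 \<le> t \<longrightarrow> \<bar>Vs n t - V t\<bar> < e)"
      proof (cases "t < t0")
        case True
        then show ?thesis using dyn_low[OF d True] dyn_low[OF dn True] e by simp
      next
        case False
        then have tt: "t0 \<le> t" by simp
        obtain s where s: "\<tau> s = t" using tau_surj[OF d b] by blast
        obtain s' where s': "\<tau>s n s' = t" using tau_surj[OF dn b] by blast
        have sT: "s \<le> T" using tau_ge[OF d b a m, of s] s tT by simp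
        have s'T: "s' \<le> T" using tau_ge[OF dn[of n] b a, of s'] mn s' tT by simp
        have sl: "t0 - \<beta> \<le> s"
        proof (rule ccontr)
          assume "\<not> t0 - \<beta> \<le> s"
          then have "s < t0" using b by simp
          then have "\<tau> s = s + \<beta>" using dyn_low[OF d] by simp
          then show False using s tt \<open>\<not> t0 - \<beta> \<le> s\<close> by simp
        qed
        have ds: "\<bar>s' - s\<bar> \<le> dd/2" using H2 sl sT s'T s s' by simp
        have Vt: "V t = U s" using dyn_VU[OF d, of s] s by simp
        have Vnt: "Vs n t = Us n s'" using dyn_VU[OF dn[of n], of s'] s' by simp
        have u1: "\<bar>Us n s' - U s'\<bar> < e'/2" using H1 by simp
        have u2: "\<bar>U s' - U s\<bar> < e'/2" using dd ds by simp
        have u3: "\<bar>Us n t - U t\<bar> < e'/2" using H1 by simp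
        have vv: "\<bar>Vs n t - V t\<bar> < e'" using u1 u2 Vt Vnt by linarith
        have eq: "\<tau>s n t - \<tau> t = \<alpha> * ((Us n t - U t) - (Vs n t - V t))"
          using dyn_hi[OF d tt] dyn_hi[OF dn tt] by (simp add: algebra_simps)
        have "\<bar>\<tau>s n t - \<tau> t\<bar> = \<alpha> * \<bar>(Us n t - U t) - (Vs n t - V t)\<bar>"
          using eq a by (simp add: abs_mult)
        also have "\<dots> \<le> \<alpha> * (2*e')"
        proof (rule mult_left_mono[OF _ a])
          show "\<bar>(Us n t - U t) - (Vs n t - V t)\<bar> \<le> 2*e'" using vv u3 e'p by linarith
        qed
        also have "\<dots> < e" by (rule ae)
        finally show ?thesis using vv e'e by simp
      qed
    qed
  qed
qed

lemma all_T:
  fixes Us \<tau>s Vs :: "nat \<Rightarrow> real \<Rightarrow> real" and U \<tau> V :: "real \<Rightarrow> real"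
  assumes dn: "\<And>n. arc_dynamics \<alpha> \<beta> t0 (Us n) (\<tau>s n) (Vs n)" and d: "arc_dynamics \<alpha> \<beta> t0 U \<tau> V"
    and a: "\<alpha> \<ge> 0" and b: "\<beta> > 0"
    and mn: "\<And>n x y. x \<le> y \<Longrightarrow> Us n x \<le> Us n y" and m: "\<And>x y. x \<le> y \<Longrightarrow> U x \<le> U y"
    and Uc: "\<And>e. e > 0 \<Longrightarrow> eventually (\<lambda>n. \<forall>t. \<bar>Us n t - U t\<bar> < e) sequentially"
    and Uu: "\<And>e. e > 0 \<Longrightarrow> \<exists>d>0. \<forall>x y. \<bar>y - x\<bar> < d \<longrightarrow> \<bar>U y - U x\<bar> < e"
  shows "e > 0 \<Longrightarrow> eventually (\<lambda>n. \<forall>x \<le> t0 - \<beta> + real k * \<beta>. \<bar>\<tau>s n x - \<tau> x\<bar> < e) sequentially"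
proof (induction k arbitrary: e)
  case 0
  show ?case
  proof (intro always_eventually allI impI)
    fix n x assume "x \<le> t0 - \<beta> + real 0 * \<beta>"
    then have "x < t0" using b by simp
    then show "\<bar>\<tau>s n x - \<tau> x\<bar> < e" using dyn_low[OF d] dyn_low[OF dn] 0 by simp
  qed
next
  case (Suc k)
  have "eventually (\<lambda>n. \<forall>t\<le>(t0 - \<beta> + real k * \<beta>)+\<beta>. \<bar>\<tau>s n t - \<tau> t\<bar> < e \<and> (t0 \<le> t \<longrightarrow> \<bar>Vs n t - V t\<bar> < e)) sequentially"
    by (rule step[OF dn d a b mn m Uc Uu Suc.IH Suc.prems])
  then show ?case
    by (rule eventually_mono) (simp add: algebra_simps)
qed

theorem mainTheorem2:
  fixes \<alpha> \<beta> t0 tf :: real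
    and us :: "nat \<Rightarrow> real \<Rightarrow> real" and u :: "real \<Rightarrow> real"
    and \<tau>s Vs :: "nat \<Rightarrow> real \<Rightarrow> real" and \<tau> V :: "real \<Rightarrow> real"
  assumes "\<alpha> \<ge> 0" and "\<beta> > 0" and "t0 < tf"
    and "\<And>n. L2_plus t0 tf (us n)" and "L2_plus t0 tf u"
    and "(\<lambda>n. L2_dist t0 tf (us n) u) \<longlonglongrightarrow> 0"
    and "\<And>n. arc_dynamics \<alpha> \<beta> t0 (cum_inflow t0 tf (us n)) (\<tau>s n) (Vs n)"
    and "arc_dynamics \<alpha> \<beta> t0 (cum_inflow t0 tf u) \<tau> V"
  shows "uniform_limit {t0..tf} (\<lambda>n. cum_inflow t0 tf (us n)) (cum_inflow t0 tf u) sequentially \<and>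
           uniform_limit {t0..tf} \<tau>s \<tau> sequentially \<and>
           uniform_limit {t0..tf} Vs V sequentially"
proof -
  have mn: "\<And>n x y. x \<le> y \<Longrightarrow> cum_inflow t0 tf (us n) x \<le> cum_inflow t0 tf (us n) y"
    using cum_mono[OF assms(4)] by blast
  have m: "\<And>x y. x \<le> y \<Longrightarrow> cum_inflow t0 tf u x \<le> cum_inflow t0 tf u y"
    using cum_mono[OF assms(5)] by blast
  have Uc: "\<And>e. e > 0 \<Longrightarrow> eventually (\<lambda>n. \<forall>t. \<bar>cum_inflow t0 tf (us n) t - cum_inflow t0 tf u t\<bar> < e) sequentially"
    using cum_conv[OF assms(4) assms(5) assms(3) assms(6)] by blast
  have Uu: "\<And>e. e > 0 \<Longrightarrow> \<exists>d>0. \<forall>x y. \<bar>y - x\<bar> < d \<longrightarrow> \<bar>cum_inflow t0 tf u y - cum_inflow t0 tf u x\<bar> < e"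
    using cum_ucont[OF assms(5)] by blast
  note AT = all_T[OF assms(7) assms(8) assms(1) assms(2) mn m Uc Uu]
  obtain k :: nat where k: "(tf - t0 + \<beta>)/\<beta> < real k" using reals_Archimedean2 by blast
  define T where "T = t0 - \<beta> + real k * \<beta>"
  have "tf - t0 + \<beta> < real k * \<beta>" using k assms(2) by (simp add: divide_less_eq)
  then have kT: "tf \<le> T" unfolding T_def by simp
  have AT': "\<And>e. e > 0 \<Longrightarrow> eventually (\<lambda>n. \<forall>x\<le>T. \<bar>\<tau>s n x - \<tau> x\<bar> < e) sequentially"
    unfolding T_def by (rule AT)
  have g1: "uniform_limit {t0..tf} (\<lambda>n. cum_inflow t0 tf (us n)) (cum_inflow t0 tf u) sequentially"
    unfolding uniform_limit_iff dist_real_def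
  proof (intro allI impI)
    fix e :: real assume "e > 0"
    show "eventually (\<lambda>n. \<forall>x\<in>{t0..tf}. \<bar>cum_inflow t0 tf (us n) x - cum_inflow t0 tf u x\<bar> < e) sequentially"
      using Uc[OF \<open>e > 0\<close>] by (rule eventually_mono) simp
  qed
  have g2: "uniform_limit {t0..tf} \<tau>s \<tau> sequentially"
    unfolding uniform_limit_iff dist_real_def
  proof (intro allI impI)
    fix e :: real assume "e > 0"
    show "eventually (\<lambda>n. \<forall>x\<in>{t0..tf}. \<bar>\<tau>s n x - \<tau> x\<bar> < e) sequentially"
      using AT'[OF \<open>e > 0\<close>] by (rule eventually_mono) (use kT in auto)
  qed
  have g3: "uniform_limit {t0..tf} Vs V sequentially"
    unfolding uniform_limit_iff dist_real_def
  proof (intro allI impI)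
    fix e :: real assume e: "e > 0"
    have "eventually (\<lambda>n. \<forall>t\<le>T+\<beta>. \<bar>\<tau>s n t - \<tau> t\<bar> < e \<and> (t0 \<le> t \<longrightarrow> \<bar>Vs n t - V t\<bar> < e)) sequentially"
      by (rule step[OF assms(7) assms(8) assms(1) assms(2) mn m Uc Uu AT' e])
    then show "eventually (\<lambda>n. \<forall>x\<in>{t0..tf}. \<bar>Vs n x - V x\<bar> < e) sequentially"
    proof (rule eventually_mono, intro ballI)
      fix n x assume h: "\<forall>t\<le>T+\<beta>. \<bar>\<tau>s n t - \<tau> t\<bar> < e \<and> (t0 \<le> t \<longrightarrow> \<bar>Vs n t - V t\<bar> < e)"
        and x: "x \<in> {t0..tf}"
      have "x \<le> T + \<beta>" using x kT assms(2) by simp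
      then show "\<bar>Vs n x - V x\<bar> < e" using h x by simp
    qed
  qed
  show ?thesis using g1 g2 g3 by blast
qed

end
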